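(* Let $m\ge 2$, $\alpha_0\in(0,\tfrac{\pi}{2})$ and $b=\tfrac12\tan\alpha_0$. Then the set $$S^m_{\alpha_0}=\Big\{z\in\mathbb{C}^m:\ \text{for each }k,\ z_k=0\text{ or }|\arg z_k|\le\alpha_0,\ \ \sum_{k=1}^m z_k=1\Big\}$$ is a convex polytope: every $z\in S^m_{\alpha_0}$ is a convex combination of the $m^2$ points $e^1,\dots,e^m$ (standard basis vectors) and the $m(m-1)$ vectors having exactly two nonzero coordinates, one equal to $\tfrac12+bi$ and another equal to $\tfrac12-bi$. In particular $S^m_{\alpha_0}$ is the convex hull of these $m^2$ points.
   Context: $\arg$ denotes the principal argument with values in $(-\pi,\pi]$. A convex polytope in $\mathbb{C}^m$ is the convex hull of finitely many points. *)

theory Defs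
  imports "HOL-Analysis.Analysis"
begin

definition S_set :: "real \<Rightarrow> (complex ^ 'm::finite) set" where
  "S_set \<alpha>0 = {z. (\<forall>k. z $ k = 0 \<or> \<bar>Arg (z $ k)\<bar> \<le> \<alpha>0) \<and> (\<Sum>k\<in>UNIV. z $ k) = 1}"

definition two_vec :: "real \<Rightarrow> 'm::finite \<Rightarrow> 'm \<Rightarrow> complex ^ 'm" where
  "two_vec b j k = (\<chi> i. if i = j then Complex (1/2) b
                         else if i = k then Complex (1/2) (- b) else 0)"

definition vertex_set :: "real \<Rightarrow> (complex ^ 'm::finite) set" where
  "vertex_set b = {axis k 1 | k. True} \<union> {two_vec b j k | j k. j \<noteq> k}"

end

theory Submission
  imports Defs
begin

lemma sector_iff:
  fixes w :: complex and a :: real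
  assumes "0 < a" "a < pi/2"
  shows "(w = 0 \<or> \<bar>Arg w\<bar> \<le> a) \<longleftrightarrow> \<bar>Im w\<bar> \<le> tan a * Re w"
proof -
  have ta: "tan a > 0" using assms by (simp add: tan_gt_zero)
  have at: "arctan (tan a) = a" using assms by (simp add: arctan_tan)
  show ?thesis
  proof
    assume h: "w = 0 \<or> \<bar>Arg w\<bar> \<le> a"
    show "\<bar>Im w\<bar> \<le> tan a * Re w"
    proof (cases "w = 0")
      case True then show ?thesis by simp
    next
      case False
      then have "\<bar>Arg w\<bar> < pi/2" using h assms by linarith
      then have re: "Re w > 0" using Arg_Re_pos False by blast
      have "\<bar>arctan (Im w / Re w)\<bar> \<le> a" using h False arg_conv_arctan[OF re] by simp
      then have "arctan \<bar>Im w / Re w\<bar> \<le> arctan (tan a)" using at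
        by (simp add: abs_if arctan_minus split: if_splits)
      then have "\<bar>Im w / Re w\<bar> \<le> tan a" by (simp add: arctan_le_iff)
      then show ?thesis using re by (simp add: abs_div divide_le_eq)
    qed
  next
    assume h: "\<bar>Im w\<bar> \<le> tan a * Re w"
    show "w = 0 \<or> \<bar>Arg w\<bar> \<le> a"
    proof (cases "Re w = 0")
      case True
      then have "Im w = 0" using h by simp
      then show ?thesis using True by (simp add: complex_eq_iff)
    next
      case False
      then have re: "Re w > 0" using h ta
        by (smt (verit) zero_le_mult_iff)
      have "\<bar>Im w / Re w\<bar> \<le> tan a" using h re by (simp add: abs_div divide_le_eq)
      then have "arctan \<bar>Im w / Re w\<bar> \<le> a" using at by (metis arctan_le_iff)
      then have "\<bar>arctan (Im w / Re w)\<bar> \<le> a"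
        by (simp add: abs_if arctan_minus split: if_splits)
      then show ?thesis using arg_conv_arctan[OF re] by simp
    qed
  qed
qed


lemma sum_pos_neg:
  fixes y :: "'a::finite \<Rightarrow> real"
  assumes "(\<Sum>i\<in>UNIV. y i) = 0"
  shows "(\<Sum>i\<in>UNIV. max 0 (- y i)) = (\<Sum>i\<in>UNIV. max 0 (y i))"
proof -
  have "(\<Sum>i\<in>UNIV. y i) = (\<Sum>i\<in>UNIV. max 0 (y i) - max 0 (- y i))"
    by (rule sum.cong) auto
  then have "(\<Sum>i\<in>UNIV. y i) = (\<Sum>i\<in>UNIV. max 0 (y i)) - (\<Sum>i\<in>UNIV. max 0 (- y i))"
    by (simp add: sum_subtractf)
  then show ?thesis using assms by simp
qed

lemma decomp:
  fixes x y :: "'m::finite \<Rightarrow> real" and b :: real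
  assumes b: "b > 0" and bd: "\<And>i. \<bar>y i\<bar> \<le> 2 * b * x i"
    and sx: "(\<Sum>i\<in>UNIV. x i) = 1" and sy: "(\<Sum>i\<in>UNIV. y i) = 0"
  shows "(\<chi> i. Complex (x i) (y i)) \<in> convex hull (vertex_set b :: (complex ^ 'm) set)"
proof -
  define pos where "pos i = max 0 (y i)" for i
  define neg where "neg i = max 0 (- y i)" for i
  define Y where "Y = (\<Sum>i\<in>UNIV. pos i)"
  have sneg: "(\<Sum>i\<in>UNIV. neg i) = Y" unfolding neg_def Y_def pos_def using sum_pos_neg[OF sy] .
  have pos0: "pos i \<ge> 0" "neg i \<ge> 0" for i unfolding pos_def neg_def by auto
  have posY: "pos i \<le> Y" for i unfolding Y_def
    by (rule member_le_sum) (use pos0 in auto)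
  have negY: "neg i \<le> Y" for i unfolding sneg[symmetric]
    by (rule member_le_sum) (use pos0 in auto)
  have pn0: "pos i * neg i = 0" for i unfolding pos_def neg_def by auto
  have absy: "\<bar>y i\<bar> = pos i + neg i" for i unfolding pos_def neg_def by auto
  have yi: "y i = pos i - neg i" for i unfolding pos_def neg_def by auto
  define lam where "lam j k = pos j * neg k / (b * Y)" for j k
  define mu where "mu i = x i - \<bar>y i\<bar> / (2 * b)" for i
  have Y0: "Y \<ge> 0" using pos0 posY by (meson order.trans)
  have lam0: "lam j k \<ge> 0" for j k unfolding lam_def using pos0 b Y0
    by (intro divide_nonneg_nonneg mult_nonneg_nonneg) auto
  have lamjj: "lam j j = 0" for j unfolding lam_def using pn0 by simp
  have mu0: "mu i \<ge> 0" for i unfolding mu_def using bd[of i] b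
    by (simp add: field_simps)
  have slam1: "(\<Sum>k\<in>UNIV. lam j k) = pos j / b" for j
  proof -
    have "(\<Sum>k\<in>UNIV. lam j k) = pos j * Y / (b * Y)"
      unfolding lam_def sneg[symmetric] by (simp add: sum_divide_distrib sum_distrib_left)
    also have "\<dots> = pos j / b"
    proof (cases "Y = 0")
      case True then show ?thesis using posY[of j] pos0[of j] by simp
    next
      case False then show ?thesis using b by simp
    qed
    finally show ?thesis .
  qed
  have slam2: "(\<Sum>j\<in>UNIV. lam j k) = neg k / b" for k
  proof -
    have "(\<Sum>j\<in>UNIV. lam j k) = (\<Sum>j\<in>UNIV. pos j) * neg k / (b * Y)"
      unfolding lam_def by (simp add: sum_divide_distrib[symmetric] sum_distrib_right[symmetric])
    also have "\<dots> = neg k * Y / (b * Y)" unfolding Y_def by simp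
    also have "\<dots> = neg k / b"
    proof (cases "Y = 0")
      case True then show ?thesis using negY[of k] pos0[of k] by simp
    next
      case False then show ?thesis using b by simp
    qed
    finally show ?thesis .
  qed
  define w :: "'m + 'm \<times> 'm \<Rightarrow> real" where
    "w = case_sum mu (\<lambda>(j,k). lam j k)"
  define p :: "'m + 'm \<times> 'm \<Rightarrow> complex ^ 'm" where
    "p = case_sum (\<lambda>i. axis i 1) (\<lambda>(j,k). if j = k then axis j 1 else two_vec b j k)"
  have split: "(\<Sum>u\<in>UNIV. f u) = (\<Sum>i\<in>UNIV. f (Inl i)) + (\<Sum>j\<in>UNIV. \<Sum>k\<in>UNIV. f (Inr (j,k)))"
    for f :: "'m + 'm \<times> 'm \<Rightarrow> 'b::comm_monoid_add"
  proof -
    have "(\<Sum>u\<in>UNIV. f u) = (\<Sum>u\<in>(UNIV <+> UNIV). f u)" by (simp only: UNIV_Plus_UNIV)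
    also have "\<dots> = (\<Sum>i\<in>UNIV. f (Inl i)) + (\<Sum>q\<in>UNIV. f (Inr q))"
      by (rule sum.Plus[unfolded o_def]) auto
    also have "(\<Sum>q\<in>UNIV. f (Inr q)) = (\<Sum>j\<in>UNIV. \<Sum>k\<in>UNIV. f (Inr (j,k)))"
      by (simp add: sum.cartesian_product UNIV_Times_UNIV[symmetric] del: UNIV_Times_UNIV)
    finally show ?thesis .
  qed
  have "(\<Sum>u\<in>UNIV. w u *\<^sub>R p u) \<in> convex hull (vertex_set b)"
  proof (rule convex_sum)
    show "convex (convex hull vertex_set b)" by simp
    show "sum w UNIV = 1"
    proof -
      have "sum w UNIV = (\<Sum>i\<in>UNIV. mu i) + (\<Sum>j\<in>UNIV. pos j / b)"
        using split[of w] by (simp add: w_def slam1)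
      also have "(\<Sum>i\<in>UNIV. mu i) = (\<Sum>i\<in>UNIV. x i) - (\<Sum>i\<in>UNIV. \<bar>y i\<bar>) / (2 * b)"
        by (simp add: mu_def sum_subtractf sum_divide_distrib)
      also have "(\<Sum>i\<in>UNIV. \<bar>y i\<bar>) = Y + Y"
        by (simp add: absy sum.distrib sneg Y_def)
      also have "(\<Sum>j\<in>UNIV. pos j / b) = Y / b"
        by (simp add: sum_divide_distrib[symmetric] Y_def)
      finally show ?thesis using sx b by (simp add: field_simps)
    qed
    show "\<And>i. i \<in> UNIV \<Longrightarrow> 0 \<le> w i" unfolding w_def using lam0 mu0 by (auto split: sum.splits)
    show "\<And>i. i \<in> UNIV \<Longrightarrow> p i \<in> convex hull vertex_set b"
      unfolding p_def vertex_set_def by (auto split: sum.splits intro!: hull_inc)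
  qed auto
  moreover have "(\<Sum>u\<in>UNIV. w u *\<^sub>R p u) = (\<chi> i. Complex (x i) (y i))"
  proof (subst vec_eq_iff, intro allI)
    fix i
    have h1: "(\<Sum>j\<in>UNIV. \<Sum>k\<in>UNIV. if j = i then g j k else 0) = (\<Sum>k\<in>UNIV. g i k)"
      for g :: "'m \<Rightarrow> 'm \<Rightarrow> real"
    proof -
      have "(\<Sum>j\<in>UNIV. \<Sum>k\<in>UNIV. if j = i then g j k else 0)
          = (\<Sum>j\<in>UNIV. if j = i then (\<Sum>k\<in>UNIV. g j k) else 0)"
        by (rule sum.cong) auto
      then show ?thesis by simp
    qed
    have h2: "(\<Sum>j\<in>UNIV. \<Sum>k\<in>UNIV. if k = i then g j k else 0) = (\<Sum>j\<in>UNIV. g j i)"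
      for g :: "'m \<Rightarrow> 'm \<Rightarrow> real"
      by simp
    have ax: "(\<Sum>i'\<in>UNIV. mu i' *\<^sub>R (axis i' 1 :: complex ^ 'm) $ i) = of_real (mu i)"
      by (simp add: axis_def scaleR_conv_of_real if_distrib[of "\<lambda>x. _ * x"] cong: if_cong)
    have reP: "lam j k * Re (p (Inr (j,k)) $ i) =
        (if j = i then lam j k / 2 else 0) + (if k = i then lam j k / 2 else 0)" for j k
      by (cases "j = k") (auto simp: lamjj p_def two_vec_def)
    have imP: "lam j k * Im (p (Inr (j,k)) $ i) =
        (if j = i then b * lam j k else 0) - (if k = i then b * lam j k else 0)" for j k
      by (cases "j = k") (auto simp: lamjj p_def two_vec_def)
    have L: "(\<Sum>u\<in>UNIV. w u *\<^sub>R p u) $ i = of_real (mu i) +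
        (\<Sum>j\<in>UNIV. \<Sum>k\<in>UNIV. lam j k *\<^sub>R (p (Inr (j,k)) $ i))"
      using split[of "\<lambda>u. w u *\<^sub>R p u"] ax by (simp add: sum_component w_def p_def)
    have "Re ((\<Sum>u\<in>UNIV. w u *\<^sub>R p u) $ i) = mu i + (pos i / b + neg i / b) / 2"
      unfolding L by (simp add: Re_sum reP sum.distrib h1 h2 slam1 slam2 sum_divide_distrib[symmetric])
    also have "\<dots> = x i" using b by (simp add: mu_def absy field_simps)
    finally have re: "Re ((\<Sum>u\<in>UNIV. w u *\<^sub>R p u) $ i) = x i" .
    have "Im ((\<Sum>u\<in>UNIV. w u *\<^sub>R p u) $ i) = b * (pos i / b) - b * (neg i / b)"
      unfolding L by (simp add: Im_sum imP sum_subtractf h1 h2 slam1 slam2 sum_distrib_left[symmetric])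
    also have "\<dots> = y i" using b by (simp add: yi)
    finally have im: "Im ((\<Sum>u\<in>UNIV. w u *\<^sub>R p u) $ i) = y i" .
    show "(\<Sum>u\<in>UNIV. w u *\<^sub>R p u) $ i = (\<chi> i. Complex (x i) (y i)) $ i"
      using re im by (simp add: complex_eq_iff)
  qed
  ultimately show ?thesis by simp
qed


lemma S_char:
  assumes "0 < a" "a < pi/2"
  shows "S_set a = {z :: complex ^ 'm::finite. (\<forall>k. \<bar>Im (z $ k)\<bar> \<le> tan a * Re (z $ k)) \<and> (\<Sum>k\<in>UNIV. z $ k) = 1}"
  unfolding S_set_def using sector_iff[OF assms] by blast

lemma S_convex:
  fixes t :: real
  shows "convex {z :: complex ^ 'm::finite. (\<forall>k. \<bar>Im (z $ k)\<bar> \<le> t * Re (z $ k)) \<and> (\<Sum>k\<in>UNIV. z $ k) = 1}"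
proof (unfold convex_def, safe)
  fix x y :: "complex ^ 'm" and u v :: real and k
  assume hx: "\<forall>k. \<bar>Im (x $ k)\<bar> \<le> t * Re (x $ k)" and hy: "\<forall>k. \<bar>Im (y $ k)\<bar> \<le> t * Re (y $ k)"
    and u: "0 \<le> u" and v: "0 \<le> v" and uv: "u + v = 1"
  have "\<bar>u * Im (x $ k) + v * Im (y $ k)\<bar> \<le> u * \<bar>Im (x $ k)\<bar> + v * \<bar>Im (y $ k)\<bar>"
    using u v by (simp add: abs_mult abs_triangle_ineq[THEN order_trans])
  also have "\<dots> \<le> u * (t * Re (x $ k)) + v * (t * Re (y $ k))"
    using hx hy u v by (simp add: add_mono mult_left_mono)
  finally show "\<bar>Im ((u *\<^sub>R x + v *\<^sub>R y) $ k)\<bar> \<le> t * Re ((u *\<^sub>R x + v *\<^sub>R y) $ k)"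
    by (simp add: algebra_simps)
next
  fix x y :: "complex ^ 'm" and u v :: real
  assume "(\<Sum>k\<in>UNIV. x $ k) = 1" "(\<Sum>k\<in>UNIV. y $ k) = 1" "u + v = 1"
  then show "(\<Sum>k\<in>UNIV. (u *\<^sub>R x + v *\<^sub>R y) $ k) = 1"
    by (simp add: sum.distrib scaleR_sum_right[symmetric] scaleR_add_left[symmetric])
qed

lemma vertex_finite: "finite (vertex_set b :: (complex ^ 'm::finite) set)"
proof -
  have "vertex_set b \<subseteq> range (\<lambda>k. axis k 1) \<union> range (\<lambda>(j,k). two_vec b j (k::'m))"
    unfolding vertex_set_def by auto
  then show ?thesis by (rule finite_subset) auto
qed

theorem theorem3p2:
  fixes \<alpha>0 b :: real
  assumes "CARD('m::finite) \<ge> 2"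
    and "0 < \<alpha>0" and "\<alpha>0 < pi / 2"
    and "b = tan \<alpha>0 / 2"
  shows "polytope (S_set \<alpha>0 :: (complex ^ 'm) set)
         \<and> S_set \<alpha>0 = convex hull (vertex_set b :: (complex ^ 'm) set)"
proof -
  define t where "t = tan \<alpha>0"
  have t: "t > 0" unfolding t_def using assms by (simp add: tan_gt_zero)
  have b: "b > 0" "2 * b = t" using assms t unfolding t_def by auto
  have S: "S_set \<alpha>0 = {z :: complex ^ 'm. (\<forall>k. \<bar>Im (z $ k)\<bar> \<le> t * Re (z $ k)) \<and> (\<Sum>k\<in>UNIV. z $ k) = 1}"
    unfolding t_def using S_char assms by blast
  have eq: "S_set \<alpha>0 = convex hull (vertex_set b :: (complex ^ 'm) set)"
  proof
    show "S_set \<alpha>0 \<subseteq> convex hull (vertex_set b :: (complex ^ 'm) set)"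
    proof
      fix z :: "complex ^ 'm" assume "z \<in> S_set \<alpha>0"
      then have h1: "\<And>k. \<bar>Im (z $ k)\<bar> \<le> 2 * b * Re (z $ k)" and h2: "(\<Sum>k\<in>UNIV. z $ k) = 1"
        unfolding S b(2) by auto
      have "(\<chi> i. Complex (Re (z $ i)) (Im (z $ i))) \<in> convex hull (vertex_set b :: (complex ^ 'm) set)"
        by (rule decomp[OF b(1) h1]) (use h2 in \<open>simp_all add: Re_sum[symmetric] Im_sum[symmetric]\<close>)
      then show "z \<in> convex hull (vertex_set b)" by (simp add: vec_eq_iff complex_eq_iff)
    qed
  next
    show "convex hull (vertex_set b :: (complex ^ 'm) set) \<subseteq> S_set \<alpha>0"
    proof (rule hull_minimal)
      show "convex (S_set \<alpha>0 :: (complex ^ 'm) set)" unfolding S by (rule S_convex)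
      show "vertex_set b \<subseteq> (S_set \<alpha>0 :: (complex ^ 'm) set)"
      proof
        fix v :: "complex ^ 'm" assume "v \<in> vertex_set b"
        then consider (a) k where "v = axis k 1" | (c) j k where "j \<noteq> k" "v = two_vec b j k"
          unfolding vertex_set_def by blast
        then show "v \<in> S_set \<alpha>0"
        proof cases
          case a
          then show ?thesis unfolding S using t by (auto simp: axis_def)
        next
          case c
          have "(\<Sum>i\<in>UNIV. v $ i) = (\<Sum>i\<in>UNIV. (if i = j then Complex (1/2) b else 0) + (if i = k then Complex (1/2) (-b) else 0))"
            using c by (intro sum.cong) (auto simp: two_vec_def)
          also have "\<dots> = 1" by (simp add: sum.distrib complex_eq_iff)
          finally have "(\<Sum>i\<in>UNIV. v $ i) = 1" .
          moreover have "\<bar>Im (v $ i)\<bar> \<le> t * Re (v $ i)" for i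
            using c b by (auto simp: two_vec_def)
          ultimately show ?thesis unfolding S by auto
        qed
      qed
    qed
  qed
  show ?thesis using eq vertex_finite unfolding polytope_def by blast
qed

end
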